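(* Consider the following scheduling market. There are $d$ machine types; $M_k$ is the finite set of machines of type $k$, and the goods are all machines $(j,k)$, $j\in M_k$, each of supply $1$. Each agent (job) $i\in A$ has requirements $r_{ik}\ge0$ and covering constraints $\sum_{j\in M_k}x_{ijk}\ge r_{ik}$ for all $k\in[d]$, $x_{ijk}\ge0$. All agents face the same delay $d_{jk}\ge0$ on machine $j$ of type $k$. Assume $|M_k|\ge\sum_{i\in A}r_{ik}$ for every $k$. Then this market satisfies extensibility.
   Context: An allocation $X\ge0$ is supply respecting if each good is allocated in total at most $1$. For a set of agents $S$, an allocation $X$ is jointly optimal for $S$ if it satisfies the covering constraints of all $i\in S$, is supply respecting, and minimizes the total delay $\sum_{i\in S}\sum_{k}\sum_{j\in M_k}d_{jk}x_{ijk}$ among such allocations. A market satisfies extensibility if for every $S\subset A$, every $X$ jointly optimal for $S$ and every $i\in A\setminus S$, there is $X'$ jointly optimal for $S\cup\{i\}$ such that every agent $i'\in S$ has the same delay $\sum_{k,j}d_{jk}x'_{i'jk}=\sum_{k,j}d_{jk}x_{i'jk}$. *)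

theory Defs
  imports Complex_Main
begin

text \<open>Only the entries with i in the considered agent set S, k < d and j in M k matter.
r i k is the requirement of agent i for type k, dl j k the delay of machine j of type k.\<close>

definition supply_respecting ::
  "nat \<Rightarrow> (nat \<Rightarrow> 'm set) \<Rightarrow> 'a set \<Rightarrow> ('a \<Rightarrow> 'm \<Rightarrow> nat \<Rightarrow> real) \<Rightarrow> bool" where
  "supply_respecting d M S X \<longleftrightarrow>
     (\<forall>k<d. \<forall>j\<in>M k. (\<Sum>i\<in>S. X i j k) \<le> 1)"

definition nonneg_alloc ::
  "nat \<Rightarrow> (nat \<Rightarrow> 'm set) \<Rightarrow> 'a set \<Rightarrow> ('a \<Rightarrow> 'm \<Rightarrow> nat \<Rightarrow> real) \<Rightarrow> bool" where
  "nonneg_alloc d M S X \<longleftrightarrow> (\<forall>i\<in>S. \<forall>k<d. \<forall>j\<in>M k. 0 \<le> X i j k)"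

definition satisfies_covering ::
  "nat \<Rightarrow> (nat \<Rightarrow> 'm set) \<Rightarrow> ('a \<Rightarrow> nat \<Rightarrow> real) \<Rightarrow> 'a set \<Rightarrow> ('a \<Rightarrow> 'm \<Rightarrow> nat \<Rightarrow> real) \<Rightarrow> bool" where
  "satisfies_covering d M r S X \<longleftrightarrow> (\<forall>i\<in>S. \<forall>k<d. (\<Sum>j\<in>M k. X i j k) \<ge> r i k)"

definition feasible_for ::
  "nat \<Rightarrow> (nat \<Rightarrow> 'm set) \<Rightarrow> ('a \<Rightarrow> nat \<Rightarrow> real) \<Rightarrow> 'a set \<Rightarrow> ('a \<Rightarrow> 'm \<Rightarrow> nat \<Rightarrow> real) \<Rightarrow> bool" where
  "feasible_for d M r S X \<longleftrightarrow>
     nonneg_alloc d M S X \<and> satisfies_covering d M r S X \<and> supply_respecting d M S X"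

definition agent_delay ::
  "nat \<Rightarrow> (nat \<Rightarrow> 'm set) \<Rightarrow> ('m \<Rightarrow> nat \<Rightarrow> real) \<Rightarrow> ('a \<Rightarrow> 'm \<Rightarrow> nat \<Rightarrow> real) \<Rightarrow> 'a \<Rightarrow> real" where
  "agent_delay d M dl X i = (\<Sum>k<d. \<Sum>j\<in>M k. dl j k * X i j k)"

definition total_delay ::
  "nat \<Rightarrow> (nat \<Rightarrow> 'm set) \<Rightarrow> ('m \<Rightarrow> nat \<Rightarrow> real) \<Rightarrow> 'a set \<Rightarrow> ('a \<Rightarrow> 'm \<Rightarrow> nat \<Rightarrow> real) \<Rightarrow> real" where
  "total_delay d M dl S X = (\<Sum>i\<in>S. \<Sum>k<d. \<Sum>j\<in>M k. dl j k * X i j k)"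

definition jointly_optimal ::
  "nat \<Rightarrow> (nat \<Rightarrow> 'm set) \<Rightarrow> ('a \<Rightarrow> nat \<Rightarrow> real) \<Rightarrow> ('m \<Rightarrow> nat \<Rightarrow> real) \<Rightarrow> 'a set
     \<Rightarrow> ('a \<Rightarrow> 'm \<Rightarrow> nat \<Rightarrow> real) \<Rightarrow> bool" where
  "jointly_optimal d M r dl S X \<longleftrightarrow>
     feasible_for d M r S X \<and>
     (\<forall>Y. feasible_for d M r S Y \<longrightarrow> total_delay d M dl S X \<le> total_delay d M dl S Y)"

definition extensibility ::
  "nat \<Rightarrow> (nat \<Rightarrow> 'm set) \<Rightarrow> ('a \<Rightarrow> nat \<Rightarrow> real) \<Rightarrow> ('m \<Rightarrow> nat \<Rightarrow> real) \<Rightarrow> 'a set \<Rightarrow> bool" where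
  "extensibility d M r dl A \<longleftrightarrow>
     (\<forall>S X i. S \<subseteq> A \<longrightarrow> jointly_optimal d M r dl S X \<longrightarrow> i \<in> A - S \<longrightarrow>
        (\<exists>X'. jointly_optimal d M r dl (insert i S) X' \<and>
              (\<forall>i'\<in>S. agent_delay d M dl X' i' = agent_delay d M dl X i')))"

end

theory Submission
  imports Defs
begin


lemma core_ident:
  fixes J :: "'j set" and dl v :: "'j \<Rightarrow> real"
  shows "(\<Sum>j\<in>J. dl j * v j) = (\<Sum>j\<in>J. (dl j - t) * v j) + t * sum v J"
proof -
  have "(\<Sum>j\<in>J. (dl j - t) * v j) + t * sum v J = (\<Sum>j\<in>J. (dl j - t) * v j + t * v j)"
    by (simp add: sum.distrib sum_distrib_left)
  also have "\<dots> = (\<Sum>j\<in>J. dl j * v j)" by (rule sum.cong) (auto simp: algebra_simps)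
  finally show ?thesis by simp
qed

lemma lb:
  fixes J :: "'j set" and dl v :: "'j \<Rightarrow> real"
  assumes "\<forall>j\<in>J. 0 \<le> v j \<and> v j \<le> 1" "R \<le> sum v J" "0 \<le> t"
  shows "t * R + (\<Sum>j\<in>J. min 0 (dl j - t)) \<le> (\<Sum>j\<in>J. dl j * v j)"
proof -
  have p: "min 0 (dl j - t) \<le> (dl j - t) * v j" if "j\<in>J" for j
  proof (cases "dl j < t")
    case True
    with assms(1) that have "(dl j - t) * 1 \<le> (dl j - t) * v j" by (intro mult_left_mono_neg) auto
    then show ?thesis by simp
  next
    case False then show ?thesis using assms(1) that by simp
  qed
  have "(\<Sum>j\<in>J. min 0 (dl j - t)) \<le> (\<Sum>j\<in>J. (dl j - t) * v j)" using p by (rule sum_mono)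
  moreover have "t * R \<le> t * sum v J" using assms by (simp add: mult_left_mono)
  ultimately show ?thesis using core_ident[of dl v J t] by linarith
qed

lemma lb_eq:
  fixes J :: "'j set" and dl v :: "'j \<Rightarrow> real"
  assumes fin: "finite J" and vb: "\<forall>j\<in>J. 0 \<le> v j \<and> v j \<le> 1" and Rv: "R \<le> sum v J" and t0: "0 \<le> t"
    and eq: "(\<Sum>j\<in>J. dl j * v j) = t * R + (\<Sum>j\<in>J. min 0 (dl j - t))"
  shows "(\<forall>j\<in>J. dl j < t \<longrightarrow> v j = 1) \<and> (\<forall>j\<in>J. t < dl j \<longrightarrow> v j = 0) \<and> (0 < t \<longrightarrow> sum v J = R)"
proof -
  define e where "e j = (dl j - t) * v j - min 0 (dl j - t)" for j
  have e0: "0 \<le> e j" if "j\<in>J" for j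
  proof (cases "dl j < t")
    case True
    with vb that have "(dl j - t) * 1 \<le> (dl j - t) * v j" by (intro mult_left_mono_neg) auto
    then show ?thesis using True by (simp add: e_def)
  next
    case False then show ?thesis using vb that by (simp add: e_def)
  qed
  have s: "(\<Sum>j\<in>J. e j) + t * (sum v J - R) = 0"
  proof -
    have "(\<Sum>j\<in>J. e j) = (\<Sum>j\<in>J. (dl j - t) * v j) - (\<Sum>j\<in>J. min 0 (dl j - t))"
      unfolding e_def by (rule sum_subtractf)
    moreover have "t * (sum v J - R) = t * sum v J - t * R" by (simp add: right_diff_distrib)
    ultimately show ?thesis using eq core_ident[of dl v J t] by linarith
  qed
  have "0 \<le> (\<Sum>j\<in>J. e j)" using e0 by (simp add: sum_nonneg)
  moreover have "0 \<le> t * (sum v J - R)" using t0 Rv by simp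
  ultimately have a: "(\<Sum>j\<in>J. e j) = 0" and b: "t * (sum v J - R) = 0" using s by linarith+
  have ez: "\<forall>j\<in>J. e j = 0" using a sum_nonneg_eq_0_iff[OF fin, of e] e0 by blast
  show ?thesis
  proof (intro conjI ballI impI)
    fix j assume j: "j \<in> J" "dl j < t"
    then have "(dl j - t) * (v j - 1) = 0" using ez by (simp add: e_def algebra_simps)
    then show "v j = 1" using j by simp
  next
    fix j assume j: "j \<in> J" "t < dl j"
    then have "(dl j - t) * v j = 0" using ez by (simp add: e_def)
    then show "v j = 0" using j by simp
  next
    assume "0 < t" then show "sum v J = R" using b by simp
  qed
qed

lemma cs_cost:
  fixes J :: "'j set" and dl v :: "'j \<Rightarrow> real"
  assumes "\<forall>j\<in>J. (dl j < t \<longrightarrow> v j = 1) \<and> (t < dl j \<longrightarrow> v j = 0)" "sum v J = R"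
  shows "(\<Sum>j\<in>J. dl j * v j) = t * R + (\<Sum>j\<in>J. min 0 (dl j - t))"
proof -
  have "(dl j - t) * v j = min 0 (dl j - t)" if "j \<in> J" for j
    using assms(1) that by (cases "dl j < t"; cases "t < dl j") auto
  then have "(\<Sum>j\<in>J. (dl j - t) * v j) = (\<Sum>j\<in>J. min 0 (dl j - t))" by (rule sum.cong[OF refl])
  then show ?thesis using core_ident[of dl v J t] assms(2) by simp
qed

lemma greedy:
  fixes J :: "'j set" and c dl :: "'j \<Rightarrow> real"
  shows "finite J \<Longrightarrow> \<forall>j\<in>J. 0 \<le> c j \<Longrightarrow> \<forall>j\<in>J. 0 \<le> dl j \<Longrightarrow> 0 \<le> R \<Longrightarrow> R \<le> sum c J \<Longrightarrow>
    \<exists>w t. 0 \<le> t \<and> (\<forall>j\<in>J. 0 \<le> w j \<and> w j \<le> c j \<and> (dl j < t \<longrightarrow> w j = c j) \<and> (t < dl j \<longrightarrow> w j = 0)) \<and> sum w J = R"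
proof (induction J arbitrary: R rule: finite_psubset_induct)
  case (psubset J)
  show ?case
  proof (cases "J = {}")
    case True
    then have "R = 0" using psubset.prems by simp
    then show ?thesis using True by (intro exI[of _ "\<lambda>j. 0"] exI[of _ 0]) simp
  next
    case False
    have "Min (dl ` J) \<in> dl ` J" using False psubset.hyps by (intro Min_in) auto
    then obtain a where a: "a \<in> J" "dl a = Min (dl ` J)" by auto
    have amin: "\<forall>j\<in>J. dl a \<le> dl j" using a psubset.hyps by auto
    show ?thesis
    proof (cases "R \<le> c a")
      case True
      show ?thesis
        apply (rule exI[of _ "\<lambda>j. if j = a then R else 0"], rule exI[of _ "dl a"])
        using True amin a(1) psubset.prems psubset.hyps by (auto simp: sum.delta)
    next
      case False
      have ca: "0 \<le> c a" using psubset.prems a by auto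
      have sc: "sum c J = c a + sum c (J - {a})" using a psubset.hyps by (simp add: sum.remove)
      have sub: "J - {a} \<subset> J" using a by auto
      have IH: "\<exists>w t. 0 \<le> t \<and> (\<forall>j\<in>J - {a}. 0 \<le> w j \<and> w j \<le> c j \<and> (dl j < t \<longrightarrow> w j = c j) \<and> (t < dl j \<longrightarrow> w j = 0)) \<and> sum w (J - {a}) = R - c a"
        by (rule psubset.IH[OF sub]) (use psubset.prems False sc in auto)
      then obtain w t where wt: "0 \<le> t" "\<forall>j\<in>J - {a}. 0 \<le> w j \<and> w j \<le> c j \<and> (dl j < t \<longrightarrow> w j = c j) \<and> (t < dl j \<longrightarrow> w j = 0)"
        "sum w (J - {a}) = R - c a" by blast
      have sw: "sum (w(a := c a)) J = c a + sum w (J - {a})"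
        using a psubset.hyps by (simp add: sum.remove)
      have B: "\<forall>j\<in>J. 0 \<le> (w(a := c a)) j \<and> (w(a := c a)) j \<le> c j \<and> (dl j < max t (dl a) \<longrightarrow> (w(a := c a)) j = c j) \<and>
          (max t (dl a) < dl j \<longrightarrow> (w(a := c a)) j = 0)"
      proof
        fix j assume j: "j \<in> J"
        show "0 \<le> (w(a := c a)) j \<and> (w(a := c a)) j \<le> c j \<and> (dl j < max t (dl a) \<longrightarrow> (w(a := c a)) j = c j) \<and>
          (max t (dl a) < dl j \<longrightarrow> (w(a := c a)) j = 0)"
        proof (cases "j = a")
          case True then show ?thesis using ca by simp
        next
          case False
          then have "j \<in> J - {a}" using j by auto
          then show ?thesis using wt(2) amin j False by auto
        qed
      qed
      show ?thesis
      proof (rule exI[of _ "w(a := c a)"], rule exI[of _ "max t (dl a)"], intro conjI)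
        show "0 \<le> max t (dl a)" using wt(1) by simp
        show "sum (w(a := c a)) J = R" using sw wt(3) by simp
      qed (rule B)
    qed
  qed
qed



lemma per_type:
  fixes S :: "'a set" and J :: "'m set" and dl :: "'m \<Rightarrow> real" and r :: "'a \<Rightarrow> real" and X :: "'a \<Rightarrow> 'm \<Rightarrow> real"
  assumes finS: "finite S" and iS: "i \<notin> S" and finJ: "finite J"
    and dlnn: "\<forall>j\<in>J. 0 \<le> dl j" and rnn: "\<forall>i'\<in>insert i S. 0 \<le> r i'"
    and card: "sum r (insert i S) \<le> real (card J)"
    and Xnn: "\<forall>i'\<in>S. \<forall>j\<in>J. 0 \<le> X i' j" and Xcov: "\<forall>i'\<in>S. r i' \<le> sum (X i') J"
    and Xsup: "\<forall>j\<in>J. (\<Sum>i'\<in>S. X i' j) \<le> 1" and t0: "0 \<le> t"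
    and opt: "(\<Sum>j\<in>J. dl j * (\<Sum>i'\<in>S. X i' j)) = t * sum r S + (\<Sum>j\<in>J. min 0 (dl j - t))"
  shows "\<exists>X0 z \<tau>. 0 \<le> \<tau> \<and> (\<forall>i'\<in>S. \<forall>j\<in>J. 0 \<le> X0 i' j) \<and> (\<forall>i'\<in>S. sum (X0 i') J = r i')
     \<and> (\<forall>i'\<in>S. (\<Sum>j\<in>J. dl j * X0 i' j) = (\<Sum>j\<in>J. dl j * X i' j))
     \<and> (\<forall>j\<in>J. 0 \<le> z j \<and> z j + (\<Sum>i'\<in>S. X0 i' j) \<le> 1) \<and> sum z J = r i
     \<and> (\<Sum>j\<in>J. dl j * (z j + (\<Sum>i'\<in>S. X0 i' j))) = \<tau> * sum r (insert i S) + (\<Sum>j\<in>J. min 0 (dl j - \<tau>))"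
proof -
  define y where "y j = (\<Sum>i'\<in>S. X i' j)" for j
  define R where "R = sum r S"
  have ynn: "\<forall>j\<in>J. 0 \<le> y j \<and> y j \<le> 1" using Xnn Xsup by (auto simp: y_def intro: sum_nonneg)
  define s where "s i' = sum (X i') J" for i'
  have sy: "sum y J = (\<Sum>i'\<in>S. s i')" unfolding y_def s_def by (rule sum.swap)
  have Rle: "R \<le> sum y J" unfolding sy R_def s_def using Xcov by (intro sum_mono) auto
  have cs: "(\<forall>j\<in>J. dl j < t \<longrightarrow> y j = 1) \<and> (\<forall>j\<in>J. t < dl j \<longrightarrow> y j = 0) \<and> (0 < t \<longrightarrow> sum y J = R)"
    using lb_eq[OF finJ ynn Rle t0] opt unfolding y_def R_def by blast
  define X0 where "X0 i' j = X i' j * r i' / s i'" for i' j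
  have Xle_y: "X i' j \<le> y j" if "i' \<in> S" "j \<in> J" for i' j
    unfolding y_def using that Xnn finS by (intro member_le_sum) auto
  have Xle_s: "X i' j \<le> s i'" if "i' \<in> S" "j \<in> J" for i' j
    unfolding s_def using that Xnn finJ by (intro member_le_sum) auto
  have rs: "0 \<le> r i' \<and> r i' \<le> s i'" if "i' \<in> S" for i'
    using rnn Xcov that by (auto simp: s_def)
  have X0nn: "\<forall>i'\<in>S. \<forall>j\<in>J. 0 \<le> X0 i' j"
  proof (intro ballI)
    fix i' j assume i': "i' \<in> S" and j: "j \<in> J"
    have "0 \<le> r i'" "0 \<le> s i'" using rs[OF i'] by linarith+
    then show "0 \<le> X0 i' j" using Xnn i' j unfolding X0_def by simp
  qed
  have X0sum: "\<forall>i'\<in>S. sum (X0 i') J = r i'"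
  proof
    fix i' assume i': "i' \<in> S"
    have "sum (X0 i') J = s i' * r i' / s i'"
      unfolding X0_def s_def by (simp add: sum_divide_distrib[symmetric] sum_distrib_right[symmetric])
    then show "sum (X0 i') J = r i'" using rs[OF i'] by (cases "s i' = 0") auto
  qed
  have X0X: "\<forall>i'\<in>S. \<forall>j\<in>J. X0 i' j = X i' j" if tp: "0 < t"
  proof (intro ballI)
    fix i' j assume i': "i' \<in> S" and j: "j \<in> J"
    have "(\<Sum>i'\<in>S. s i' - r i') = 0" using cs tp sy by (simp add: sum_subtractf R_def)
    then have "\<forall>i'\<in>S. s i' - r i' = 0" using sum_nonneg_eq_0_iff[OF finS, of "\<lambda>i'. s i' - r i'"] rs by auto
    then have e: "s i' = r i'" using i' by auto
    show "X0 i' j = X i' j"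
    proof (cases "s i' = 0")
      case True
      then have "X i' j = 0" using Xle_s[OF i' j] Xnn i' j by force
      then show ?thesis by (simp add: X0_def)
    next
      case False then show ?thesis using e by (simp add: X0_def)
    qed
  qed
  have X0eq: "\<forall>i'\<in>S. \<forall>j\<in>J. dl j * X0 i' j = dl j * X i' j"
  proof (cases "0 < t")
    case True then show ?thesis using X0X by simp
  next
    case False
    then have t: "t = 0" using t0 by simp
    show ?thesis
    proof (intro ballI)
      fix i' j assume i': "i' \<in> S" and j: "j \<in> J"
      show "dl j * X0 i' j = dl j * X i' j"
      proof (cases "dl j = 0")
        case False
        then have "t < dl j" using dlnn j t by force
        then have "y j = 0" using cs j by blast
        then have "X i' j = 0" using Xle_y[OF i' j] Xnn i' j by force
        then show ?thesis by (simp add: X0_def)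
      qed simp
    qed
  qed
  have X0le: "X0 i' j \<le> X i' j" if i': "i' \<in> S" and j: "j \<in> J" for i' j
  proof (cases "s i' = 0")
    case True then show ?thesis using Xnn i' j by (simp add: X0_def)
  next
    case False
    then have "r i' / s i' \<le> 1" using rs[OF i'] by simp
    then have "X i' j * (r i' / s i') \<le> X i' j * 1" using Xnn i' j by (intro mult_left_mono) auto
    then show ?thesis by (simp add: X0_def)
  qed
  define y0 where "y0 j = (\<Sum>i'\<in>S. X0 i' j)" for j
  have y0b: "\<forall>j\<in>J. 0 \<le> y0 j \<and> y0 j \<le> y j"
    using X0nn X0le unfolding y0_def y_def by (auto intro: sum_nonneg sum_mono)
  have sy0: "sum y0 J = R" unfolding y0_def R_def
    by (subst sum.swap) (use X0sum in simp)
  have cs0: "\<forall>j\<in>J. dl j < t \<longrightarrow> y0 j = 1"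
  proof (intro ballI impI)
    fix j assume j: "j \<in> J" "dl j < t"
    then have tp: "0 < t" using dlnn by force
    have "y0 j = y j" unfolding y0_def y_def using X0X[OF tp] j by simp
    then show "y0 j = 1" using cs j by simp
  qed
  have cs0': "\<forall>j\<in>J. t < dl j \<longrightarrow> y0 j = 0" using cs y0b by force
  have sc: "sum (\<lambda>j. 1 - y0 j) J = real (card J) - R" using sy0 by (simp add: sum_subtractf)
  have ins: "sum r (insert i S) = r i + R" using finS iS by (simp add: R_def)
  obtain z s' where zs: "0 \<le> s'" "\<forall>j\<in>J. 0 \<le> z j \<and> z j \<le> 1 - y0 j \<and> (dl j < s' \<longrightarrow> z j = 1 - y0 j) \<and> (s' < dl j \<longrightarrow> z j = 0)"
    "sum z J = r i"
    using greedy[OF finJ, of "\<lambda>j. 1 - y0 j" dl "r i"] y0b ynn dlnn rnn card sc ins by force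
  define \<tau> where "\<tau> = max t s'"
  have cond: "\<forall>j\<in>J. (dl j < \<tau> \<longrightarrow> z j + y0 j = 1) \<and> (\<tau> < dl j \<longrightarrow> z j + y0 j = 0)"
  proof
    fix j assume j: "j \<in> J"
    show "(dl j < \<tau> \<longrightarrow> z j + y0 j = 1) \<and> (\<tau> < dl j \<longrightarrow> z j + y0 j = 0)"
    proof (intro conjI impI)
      assume "dl j < \<tau>"
      then consider "dl j < s'" | "dl j < t" unfolding \<tau>_def by linarith
      then show "z j + y0 j = 1"
      proof cases
        case 1 then show ?thesis using zs j by auto
      next
        case 2 then have "y0 j = 1" using cs0 j by auto
        then show ?thesis using zs j by force
      qed
    next
      assume "\<tau> < dl j"
      then show "z j + y0 j = 0" using zs cs0' j unfolding \<tau>_def by auto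
    qed
  qed
  have sw: "sum (\<lambda>j. z j + y0 j) J = sum r (insert i S)" using zs sy0 ins by (simp add: sum.distrib)
  have cost: "(\<Sum>j\<in>J. dl j * (z j + y0 j)) = \<tau> * sum r (insert i S) + (\<Sum>j\<in>J. min 0 (dl j - \<tau>))"
    by (rule cs_cost[OF cond sw])
  show ?thesis
    apply (rule exI[of _ X0], rule exI[of _ z], rule exI[of _ \<tau>])
    using zs X0nn X0sum X0eq cost y0b ynn unfolding y0_def \<tau>_def
    by (auto intro: sum.cong)
qed



lemma tdecomp:
  "total_delay d M dl T Z = (\<Sum>k<d. \<Sum>j\<in>M k. dl j k * (\<Sum>i\<in>T. Z i j k))"
proof -
  have "total_delay d M dl T Z = (\<Sum>k<d. \<Sum>i\<in>T. \<Sum>j\<in>M k. dl j k * Z i j k)"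
    unfolding total_delay_def by (rule sum.swap)
  also have "\<dots> = (\<Sum>k<d. \<Sum>j\<in>M k. \<Sum>i\<in>T. dl j k * Z i j k)"
    by (rule sum.cong[OF refl], rule sum.swap)
  also have "\<dots> = (\<Sum>k<d. \<Sum>j\<in>M k. dl j k * (\<Sum>i\<in>T. Z i j k))"
    by (simp add: sum_distrib_left)
  finally show ?thesis .
qed

lemma feas_agg:
  assumes "feasible_for d M r T Z" "k < d"
  shows "(\<forall>j\<in>M k. 0 \<le> (\<Sum>i\<in>T. Z i j k) \<and> (\<Sum>i\<in>T. Z i j k) \<le> 1) \<and>
         (\<Sum>i\<in>T. r i k) \<le> sum (\<lambda>j. \<Sum>i\<in>T. Z i j k) (M k)"
proof -
  have nn: "\<forall>i\<in>T. \<forall>j\<in>M k. 0 \<le> Z i j k" and cov: "\<forall>i\<in>T. r i k \<le> (\<Sum>j\<in>M k. Z i j k)"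
    and sup: "\<forall>j\<in>M k. (\<Sum>i\<in>T. Z i j k) \<le> 1"
    using assms unfolding feasible_for_def nonneg_alloc_def satisfies_covering_def supply_respecting_def by auto
  have "(\<Sum>i\<in>T. r i k) \<le> (\<Sum>i\<in>T. \<Sum>j\<in>M k. Z i j k)" using cov by (intro sum_mono) auto
  also have "\<dots> = sum (\<lambda>j. \<Sum>i\<in>T. Z i j k) (M k)" by (rule sum.swap)
  finally show ?thesis using nn sup by (auto intro: sum_nonneg)
qed

lemma sum_eq_pointwise:
  fixes f g :: "nat \<Rightarrow> real"
  assumes "finite K" "\<forall>k\<in>K. g k \<le> f k" "sum f K \<le> sum g K"
  shows "\<forall>k\<in>K. f k = g k"
proof -
  have "sum (\<lambda>k. f k - g k) K = 0" using assms(2,3) sum_mono[of K g f] by (simp add: sum_subtractf)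
  then have "\<forall>k\<in>K. f k - g k = 0" using sum_nonneg_eq_0_iff[OF assms(1), of "\<lambda>k. f k - g k"] assms(2) by auto
  then show ?thesis by auto
qed

theorem lemmaD1:
  fixes d :: nat and M :: "nat \<Rightarrow> 'm set" and A :: "'a set"
    and r :: "'a \<Rightarrow> nat \<Rightarrow> real" and dl :: "'m \<Rightarrow> nat \<Rightarrow> real"
  assumes "finite A"
    and "\<forall>k<d. finite (M k)"
    and "\<forall>i\<in>A. \<forall>k<d. r i k \<ge> 0"
    and "\<forall>k<d. \<forall>j\<in>M k. dl j k \<ge> 0"
    and "\<forall>k<d. real (card (M k)) \<ge> (\<Sum>i\<in>A. r i k)"
  shows "extensibility d M r dl A"
  unfolding extensibility_def
proof (intro allI impI)
  fix S X i
  assume SA: "S \<subseteq> A" and opt: "jointly_optimal d M r dl S X" and iA: "i \<in> A - S"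
  have finS: "finite S" using assms(1) SA finite_subset by blast
  have iS: "i \<notin> S" "i \<in> A" using iA by auto
  from opt have feas: "feasible_for d M r S X"
    and mn: "\<forall>Y. feasible_for d M r S Y \<longrightarrow> total_delay d M dl S X \<le> total_delay d M dl S Y"
    unfolding jointly_optimal_def by auto
  have Xnn: "\<forall>i'\<in>S. \<forall>k<d. \<forall>j\<in>M k. 0 \<le> X i' j k" and Xcov: "\<forall>i'\<in>S. \<forall>k<d. r i' k \<le> (\<Sum>j\<in>M k. X i' j k)"
    and Xsup: "\<forall>k<d. \<forall>j\<in>M k. (\<Sum>i'\<in>S. X i' j k) \<le> 1"
    using feas unfolding feasible_for_def nonneg_alloc_def satisfies_covering_def supply_respecting_def by auto
  define R where "R k = (\<Sum>i'\<in>S. r i' k)" for k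
  have rnn: "\<forall>i'\<in>insert i S. \<forall>k<d. 0 \<le> r i' k" using assms(3) SA iS by auto
  have Rcard: "(\<Sum>i'\<in>insert i S. r i' k) \<le> real (card (M k))" if k: "k < d" for k
  proof -
    have "(\<Sum>i'\<in>insert i S. r i' k) \<le> (\<Sum>i'\<in>A. r i' k)"
      using SA iS assms(1,3) k by (intro sum_mono2) auto
    then show ?thesis using assms(5) k by force
  qed
  have ins: "(\<Sum>i'\<in>insert i S. r i' k) = r i k + R k" for k using finS iS by (simp add: R_def)
  have R0: "0 \<le> R k" if "k < d" for k using rnn that unfolding R_def by (auto intro: sum_nonneg)
  have Rle: "R k \<le> real (card (M k))" if k: "k < d" for k
    using Rcard[OF k] ins[of k] rnn iS k by force
  define PG where "PG k g t \<longleftrightarrow> (k < d \<longrightarrow> (0 \<le> t \<and> (\<forall>j\<in>M k. 0 \<le> g j \<and> g j \<le> 1 \<and> (dl j k < t \<longrightarrow> g j = 1) \<and> (t < dl j k \<longrightarrow> g j = 0)) \<and> sum g (M k) = R k))" for k g t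
  have "\<forall>k. \<exists>g t. PG k g t"
  proof
    fix k show "\<exists>g t. PG k g t"
    proof (cases "k < d")
      case True
      have "\<exists>g t. 0 \<le> t \<and> (\<forall>j\<in>M k. 0 \<le> g j \<and> g j \<le> 1 \<and> (dl j k < t \<longrightarrow> g j = 1) \<and> (t < dl j k \<longrightarrow> g j = 0)) \<and> sum g (M k) = R k"
        using greedy[of "M k" "\<lambda>_. 1" "\<lambda>j. dl j k" "R k"] assms(2,4) True R0[OF True] Rle[OF True] by simp
      then show ?thesis unfolding PG_def by blast
    qed (simp add: PG_def)
  qed
  then have "\<exists>G. \<forall>k. \<exists>t. PG k (G k) t" by (rule choice)
  then obtain G where "\<forall>k. \<exists>t. PG k (G k) t" by blast
  then have "\<exists>T. \<forall>k. PG k (G k) (T k)" by (rule choice)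
  then obtain T where "\<forall>k. PG k (G k) (T k)" by blast
  then have GT: "\<forall>k. k < d \<longrightarrow> (0 \<le> T k \<and> (\<forall>j\<in>M k. 0 \<le> G k j \<and> G k j \<le> 1 \<and> (dl j k < T k \<longrightarrow> G k j = 1) \<and> (T k < dl j k \<longrightarrow> G k j = 0)) \<and> sum (G k) (M k) = R k)"
    unfolding PG_def by blast
  define B where "B k = T k * R k + (\<Sum>j\<in>M k. min 0 (dl j k - T k))" for k
  have Gcost: "(\<Sum>j\<in>M k. dl j k * G k j) = B k" if "k < d" for k
    unfolding B_def by (rule cs_cost) (use GT that in auto)
  have G0: "G k j = 0" if k: "k < d" and j: "j \<in> M k" and R: "R k = 0" for k j
    using sum_nonneg_eq_0_iff[of "M k" "G k"] GT assms(2) k j R by auto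
  have r0: "r i' k = 0" if k: "k < d" and i': "i' \<in> S" and R: "R k = 0" for k i'
    using sum_nonneg_eq_0_iff[OF finS, of "\<lambda>i'. r i' k"] rnn k i' R unfolding R_def by auto
  define Y where "Y i' j k = G k j * r i' k / R k" for i' j k
  have Yagg: "(\<Sum>i'\<in>S. Y i' j k) = G k j" if k: "k < d" and j: "j \<in> M k" for k j
  proof -
    have "(\<Sum>i'\<in>S. Y i' j k) = G k j * R k / R k" unfolding Y_def R_def
      by (simp add: sum_divide_distrib[symmetric] sum_distrib_left[symmetric])
    then show ?thesis using G0[OF k j] by (cases "R k = 0") auto
  qed
  have Yfeas: "feasible_for d M r S Y"
    unfolding feasible_for_def nonneg_alloc_def satisfies_covering_def supply_respecting_def
  proof (intro conjI ballI allI impI)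
    fix i' k j assume i': "i' \<in> S" and k: "k < d" and j: "j \<in> M k"
    show "0 \<le> Y i' j k" unfolding Y_def using GT k j rnn i' R0[OF k] by simp
  next
    fix i' k assume i': "i' \<in> S" and k: "k < d"
    have "(\<Sum>j\<in>M k. Y i' j k) = r i' k * R k / R k" unfolding Y_def
      using GT k by (simp add: sum_divide_distrib[symmetric] sum_distrib_right[symmetric] mult.commute)
    then show "r i' k \<le> (\<Sum>j\<in>M k. Y i' j k)" using r0[OF k i'] by (cases "R k = 0") auto
  next
    fix k j assume k: "k < d" and j: "j \<in> M k"
    show "(\<Sum>i'\<in>S. Y i' j k) \<le> 1" using Yagg[OF k j] GT k j by simp
  qed
  have costY: "total_delay d M dl S Y = (\<Sum>k<d. B k)"
    unfolding tdecomp using Yagg Gcost by simp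
  define C where "C k = (\<Sum>j\<in>M k. dl j k * (\<Sum>i'\<in>S. X i' j k))" for k
  have CB: "\<forall>k\<in>{..<d}. B k \<le> C k"
  proof
    fix k assume "k \<in> {..<d}" then have k: "k < d" by simp
    show "B k \<le> C k" unfolding B_def C_def R_def
      by (rule lb) (use feas_agg[OF feas k] GT k in auto)
  qed
  have "(\<Sum>k<d. C k) \<le> (\<Sum>k<d. B k)" using mn Yfeas costY unfolding C_def tdecomp by auto
  then have CeqB: "\<forall>k\<in>{..<d}. C k = B k" using sum_eq_pointwise[OF _ CB] by simp
  define PX where "PX k X0k zk uk \<longleftrightarrow> (k < d \<longrightarrow> (0 \<le> uk \<and> (\<forall>i'\<in>S. \<forall>j\<in>M k. 0 \<le> X0k i' j) \<and> (\<forall>i'\<in>S. sum (X0k i') (M k) = r i' k)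
     \<and> (\<forall>i'\<in>S. (\<Sum>j\<in>M k. dl j k * X0k i' j) = (\<Sum>j\<in>M k. dl j k * X i' j k))
     \<and> (\<forall>j\<in>M k. 0 \<le> zk j \<and> zk j + (\<Sum>i'\<in>S. X0k i' j) \<le> 1) \<and> sum zk (M k) = r i k
     \<and> (\<Sum>j\<in>M k. dl j k * (zk j + (\<Sum>i'\<in>S. X0k i' j))) = uk * (\<Sum>i'\<in>insert i S. r i' k) + (\<Sum>j\<in>M k. min 0 (dl j k - uk))))" for k X0k zk uk
  have "\<forall>k. \<exists>X0k zk uk. PX k X0k zk uk"
  proof
    fix k
    show "\<exists>X0k zk uk. PX k X0k zk uk"
    proof (cases "k < d")
      case True
      have "C k = B k" using CeqB True by simp
      then have opt_k: "(\<Sum>j\<in>M k. dl j k * (\<Sum>i'\<in>S. X i' j k)) = T k * (\<Sum>i'\<in>S. r i' k) + (\<Sum>j\<in>M k. min 0 (dl j k - T k))"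
        unfolding C_def B_def R_def .
      have "\<exists>X0 z \<tau>. 0 \<le> \<tau> \<and> (\<forall>i'\<in>S. \<forall>j\<in>M k. 0 \<le> X0 i' j) \<and> (\<forall>i'\<in>S. sum (X0 i') (M k) = r i' k)
     \<and> (\<forall>i'\<in>S. (\<Sum>j\<in>M k. dl j k * X0 i' j) = (\<Sum>j\<in>M k. dl j k * X i' j k))
     \<and> (\<forall>j\<in>M k. 0 \<le> z j \<and> z j + (\<Sum>i'\<in>S. X0 i' j) \<le> 1) \<and> sum z (M k) = r i k
     \<and> (\<Sum>j\<in>M k. dl j k * (z j + (\<Sum>i'\<in>S. X0 i' j))) = \<tau> * (\<Sum>i'\<in>insert i S. r i' k) + (\<Sum>j\<in>M k. min 0 (dl j k - \<tau>))"
        apply (rule per_type[of S i "M k" "\<lambda>j. dl j k" "\<lambda>i'. r i' k" "\<lambda>i' j. X i' j k" "T k"])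
        using finS iS assms(2,4) True rnn Rcard[OF True] Xnn Xcov Xsup GT opt_k by auto
      then show ?thesis unfolding PX_def by blast
    qed (simp add: PX_def)
  qed
  then have "\<exists>X0. \<forall>k. \<exists>zk uk. PX k (X0 k) zk uk" by (rule choice)
  then obtain X0 where "\<forall>k. \<exists>zk uk. PX k (X0 k) zk uk" by blast
  then have "\<exists>Z. \<forall>k. \<exists>uk. PX k (X0 k) (Z k) uk" by (rule choice)
  then obtain Z where "\<forall>k. \<exists>uk. PX k (X0 k) (Z k) uk" by blast
  then have "\<exists>U. \<forall>k. PX k (X0 k) (Z k) (U k)" by (rule choice)
  then obtain U where XZ0: "\<forall>k. PX k (X0 k) (Z k) (U k)" by blast
  have XZ: "\<forall>k. k < d \<longrightarrow> (0 \<le> U k \<and> (\<forall>i'\<in>S. \<forall>j\<in>M k. 0 \<le> X0 k i' j) \<and> (\<forall>i'\<in>S. sum (X0 k i') (M k) = r i' k)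
     \<and> (\<forall>i'\<in>S. (\<Sum>j\<in>M k. dl j k * X0 k i' j) = (\<Sum>j\<in>M k. dl j k * X i' j k))
     \<and> (\<forall>j\<in>M k. 0 \<le> Z k j \<and> Z k j + (\<Sum>i'\<in>S. X0 k i' j) \<le> 1) \<and> sum (Z k) (M k) = r i k
     \<and> (\<Sum>j\<in>M k. dl j k * (Z k j + (\<Sum>i'\<in>S. X0 k i' j))) = U k * (\<Sum>i'\<in>insert i S. r i' k) + (\<Sum>j\<in>M k. min 0 (dl j k - U k)))"
    using XZ0 unfolding PX_def by blast
  define X' where "X' i' j k = (if i' = i then Z k j else X0 k i' j)" for i' j k
  have X'S: "X' i' j k = X0 k i' j" if "i' \<in> S" for i' j k using that iS(1) unfolding X'_def by (cases "i' = i") auto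
  have agg: "(\<Sum>i'\<in>insert i S. X' i' j k) = Z k j + (\<Sum>i'\<in>S. X0 k i' j)" for j k
    using finS iS X'S by (simp add: X'_def)
  have X'feas: "feasible_for d M r (insert i S) X'"
    unfolding feasible_for_def nonneg_alloc_def satisfies_covering_def supply_respecting_def
  proof (intro conjI ballI allI impI)
    fix i' k j assume i': "i' \<in> insert i S" and k: "k < d" and j: "j \<in> M k"
    show "0 \<le> X' i' j k" using XZ k j i' by (auto simp: X'_def)
  next
    fix i' k assume i': "i' \<in> insert i S" and k: "k < d"
    show "r i' k \<le> (\<Sum>j\<in>M k. X' i' j k)"
    proof (cases "i' = i")
      case True then show ?thesis using XZ k by (simp add: X'_def)
    next
      case False then have "i' \<in> S" using i' by simp
      then show ?thesis using XZ k X'S by simp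
    qed
  next
    fix k j assume k: "k < d" and j: "j \<in> M k"
    show "(\<Sum>i'\<in>insert i S. X' i' j k) \<le> 1" using agg XZ k j by simp
  qed
  define B' where "B' k = U k * (\<Sum>i'\<in>insert i S. r i' k) + (\<Sum>j\<in>M k. min 0 (dl j k - U k))" for k
  have costX': "total_delay d M dl (insert i S) X' = (\<Sum>k<d. B' k)"
    unfolding tdecomp agg B'_def using XZ by simp
  have X'opt: "jointly_optimal d M r dl (insert i S) X'"
    unfolding jointly_optimal_def
  proof (intro conjI allI impI)
    show "feasible_for d M r (insert i S) X'" by (rule X'feas)
    fix Y' assume Y': "feasible_for d M r (insert i S) Y'"
    have "(\<Sum>k<d. B' k) \<le> (\<Sum>k<d. \<Sum>j\<in>M k. dl j k * (\<Sum>i'\<in>insert i S. Y' i' j k))"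
    proof (rule sum_mono)
      fix k assume "k \<in> {..<d}" then have k: "k < d" by simp
      show "B' k \<le> (\<Sum>j\<in>M k. dl j k * (\<Sum>i'\<in>insert i S. Y' i' j k))" unfolding B'_def
        by (rule lb) (use feas_agg[OF Y' k] XZ k in auto)
    qed
    then show "total_delay d M dl (insert i S) X' \<le> total_delay d M dl (insert i S) Y'"
      unfolding costX' tdecomp[of d M dl "insert i S" Y'] .
  qed
  show "\<exists>X'. jointly_optimal d M r dl (insert i S) X' \<and>
              (\<forall>i'\<in>S. agent_delay d M dl X' i' = agent_delay d M dl X i')"
  proof (intro exI conjI ballI)
    show "jointly_optimal d M r dl (insert i S) X'" by (rule X'opt)
    fix i' assume i': "i' \<in> S"
    show "agent_delay d M dl X' i' = agent_delay d M dl X i'"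
      unfolding agent_delay_def
    proof (rule sum.cong[OF refl])
      fix k assume "k \<in> {..<d}" then have k: "k < d" by simp
      have "(\<Sum>j\<in>M k. dl j k * X' i' j k) = (\<Sum>j\<in>M k. dl j k * X0 k i' j)" using X'S[OF i'] by simp
      also have "\<dots> = (\<Sum>j\<in>M k. dl j k * X i' j k)" using XZ k i' by blast
      finally show "(\<Sum>j\<in>M k. dl j k * X' i' j k) = (\<Sum>j\<in>M k. dl j k * X i' j k)" .
    qed
  qed
qed

end
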